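(* Let $L$ be a finite inf-semilattice with least element $\bot$ and let $\widetilde L:=\{(x,y)\in L^2: x\wedge y=\bot\}$ with the product order. Then for all $(z,t),(x,y)\in\widetilde L$ with $(z,t)\le(x,y)$, $$\mu_{\widetilde L}((z,t),(x,y))=\mu_L(z,x)\,\mu_L(t,y).$$ Consequently, if $f,g:\widetilde L\to\mathbb R$ satisfy $f(x,y)=\sum_{(x',y')\in\widetilde L,\,(x',y')\le(x,y)}g(x',y')$ for all $(x,y)\in\widetilde L$, then $g(x,y)=\sum_{(z,t)\in\widetilde L,\,(z,t)\le(x,y)}\mu_L(z,x)\mu_L(t,y)f(z,t)$ for all $(x,y)\in\widetilde L$.
   Context: For a finite poset $P$, the Möbius function $\mu_P$ is defined on pairs $a\le b$ by $\mu_P(a,a)=1$ and $\sum_{a\le c\le b}\mu_P(a,c)=0$ for $a<b$; it is characterized by: for real functions $f,g$ on $P$ (with $P$ having a least element), $g(x)=\sum_{y\le x}f(y)$ for all $x$ iff $f(x)=\sum_{y\le x}\mu_P(y,x)g(y)$ for all $x$. *)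

theory Defs
  imports Complex_Main
begin

definition mobius :: "'a set \<Rightarrow> ('a \<Rightarrow> 'a \<Rightarrow> bool) \<Rightarrow> 'a \<Rightarrow> 'a \<Rightarrow> real" where
  "mobius A le = (THE mu.
      (\<forall>a\<in>A. mu a a = 1) \<and>
      (\<forall>a\<in>A. \<forall>b\<in>A. le a b \<and> a \<noteq> b \<longrightarrow>
          (\<Sum>c\<in>{c\<in>A. le a c \<and> le c b}. mu a c) = 0) \<and>
      (\<forall>a b. \<not> (a \<in> A \<and> b \<in> A \<and> le a b) \<longrightarrow> mu a b = 0))"

definition disj_pairs :: "('a::{semilattice_inf, order_bot} \<times> 'a) set" where
  "disj_pairs = {(x, y). inf x y = bot}"

definition prod_le :: "('a::order \<times> 'a) \<Rightarrow> ('a \<times> 'a) \<Rightarrow> bool" where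
  "prod_le p q \<longleftrightarrow> fst p \<le> fst q \<and> snd p \<le> snd q"

end

theory Submission
  imports Defs
begin

definition Iv :: "'a set \<Rightarrow> ('a \<Rightarrow> 'a \<Rightarrow> bool) \<Rightarrow> 'a \<Rightarrow> 'a \<Rightarrow> 'a set" where
  "Iv A le a b = {c\<in>A. le a c \<and> le c b}"

definition po :: "'a set \<Rightarrow> ('a \<Rightarrow> 'a \<Rightarrow> bool) \<Rightarrow> bool" where
  "po A le \<longleftrightarrow> (\<forall>a\<in>A. le a a) \<and> (\<forall>a\<in>A. \<forall>b\<in>A. le a b \<and> le b a \<longrightarrow> a = b)
     \<and> (\<forall>a\<in>A. \<forall>b\<in>A. \<forall>c\<in>A. le a b \<longrightarrow> le b c \<longrightarrow> le a c)"

definition MP :: "'a set \<Rightarrow> ('a \<Rightarrow> 'a \<Rightarrow> bool) \<Rightarrow> ('a \<Rightarrow> 'a \<Rightarrow> real) \<Rightarrow> bool" where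
  "MP A le mu \<longleftrightarrow> (\<forall>a\<in>A. mu a a = 1) \<and>
      (\<forall>a\<in>A. \<forall>b\<in>A. le a b \<and> a \<noteq> b \<longrightarrow>
          (\<Sum>c\<in>{c\<in>A. le a c \<and> le c b}. mu a c) = 0) \<and>
      (\<forall>a b. \<not> (a \<in> A \<and> b \<in> A \<and> le a b) \<longrightarrow> mu a b = 0)"

lemma po_refl: "po A le \<Longrightarrow> a \<in> A \<Longrightarrow> le a a"
  unfolding po_def by blast

lemma mobius_alt: "mobius A le = (THE mu. MP A le mu)"
  unfolding mobius_def MP_def by simp

lemma Iv_less:
  assumes fin: "finite A" and po: "po A le" and b: "b \<in> A" and a: "a \<in> A" and c: "c \<in> Iv A le a b - {b}"
  shows "card (Iv A le a c) < card (Iv A le a b)"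
proof -
  have cA: "c \<in> A" "le a c" "le c b" "c \<noteq> b" using c unfolding Iv_def by auto
  have sub: "Iv A le a c \<subseteq> Iv A le a b"
    using po cA b unfolding Iv_def po_def by blast
  have "b \<notin> Iv A le a c" using po cA b unfolding Iv_def po_def by blast
  moreover have "b \<in> Iv A le a b" using po cA b a unfolding Iv_def po_def by blast
  ultimately have "Iv A le a c \<subset> Iv A le a b" using sub by blast
  moreover have "finite (Iv A le a b)" using fin unfolding Iv_def by simp
  ultimately show ?thesis by (rule psubset_card_mono[rotated])
qed

lemma mp_unique:
  assumes fin: "finite A" and po: "po A le" and m1: "MP A le m1" and m2: "MP A le m2"
  shows "m1 = m2"
proof (intro ext)
  fix a b
  have "\<forall>b. card (Iv A le a b) = n \<longrightarrow> m1 a b = m2 a b" for n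
  proof (induction n rule: nat_less_induct)
    case (1 n)
    show ?case
    proof (intro allI impI)
      fix b assume cn: "card (Iv A le a b) = n"
      show "m1 a b = m2 a b"
      proof (cases "a \<in> A \<and> b \<in> A \<and> le a b")
        case False then show ?thesis using m1 m2 unfolding MP_def by auto
      next
        case True
        show ?thesis
        proof (cases "a = b")
          case True then show ?thesis using m1 m2 \<open>a \<in> A \<and> b \<in> A \<and> le a b\<close> unfolding MP_def by auto
        next
          case False
          have bI: "b \<in> Iv A le a b" using True po unfolding Iv_def po_def by auto
          have finI: "finite (Iv A le a b)" using fin unfolding Iv_def by simp
          have eq: "m a b = - (\<Sum>c\<in>Iv A le a b - {b}. m a c)" if "MP A le m" for m
          proof -
            have "(\<Sum>c\<in>Iv A le a b. m a c) = 0" using that True False unfolding MP_def Iv_def by auto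
            moreover have "(\<Sum>c\<in>Iv A le a b. m a c) = m a b + (\<Sum>c\<in>Iv A le a b - {b}. m a c)"
              using sum.remove[OF finI bI] by simp
            ultimately show ?thesis by simp
          qed
          have "(\<Sum>c\<in>Iv A le a b - {b}. m1 a c) = (\<Sum>c\<in>Iv A le a b - {b}. m2 a c)"
          proof (rule sum.cong)
            fix c assume c: "c \<in> Iv A le a b - {b}"
            have "card (Iv A le a c) < n" using Iv_less[OF fin po _ _ c] True cn by simp
            then show "m1 a c = m2 a c" using 1 by blast
          qed simp
          then show ?thesis using eq[OF m1] eq[OF m2] by simp
        qed
      qed
    qed
  qed
  then show "m1 a b = m2 a b" by blast
qed

fun mob_n :: "'a set \<Rightarrow> ('a \<Rightarrow> 'a \<Rightarrow> bool) \<Rightarrow> nat \<Rightarrow> 'a \<Rightarrow> 'a \<Rightarrow> real" where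
  "mob_n A le 0 a b = (if a \<in> A \<and> a = b then 1 else 0)"
| "mob_n A le (Suc n) a b = (if a \<in> A \<and> b \<in> A \<and> le a b then
      (if a = b then 1 else - (\<Sum>c\<in>Iv A le a b - {b}. mob_n A le n a c)) else 0)"

lemma mob_stable:
  assumes fin: "finite A" and po: "po A le"
  shows "card (Iv A le a b) \<le> n \<Longrightarrow> n \<le> m \<Longrightarrow> mob_n A le m a b = mob_n A le n a b"
proof (induction n arbitrary: m b)
  case 0
  have e: "Iv A le a b = {}" using 0 fin unfolding Iv_def by simp
  have nc: "\<not> (a \<in> A \<and> b \<in> A \<and> le a b)"
  proof
    assume h: "a \<in> A \<and> b \<in> A \<and> le a b"
    then have "a \<in> Iv A le a b" using po_refl[OF po] unfolding Iv_def by simp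
    then show False using e by simp
  qed
  have nc2: "\<not> (a \<in> A \<and> a = b)" using nc po_refl[OF po] by metis
  show ?case
  proof (cases m)
    case 0 then show ?thesis by simp
  next
    case (Suc k) then show ?thesis by (simp only: Suc mob_n.simps nc nc2 if_False)
  qed
next
  case (Suc n)
  then obtain m' where m: "m = Suc m'" and nm: "n \<le> m'" by (cases m) auto
  show ?case
  proof (cases "a \<in> A \<and> b \<in> A \<and> le a b \<and> a \<noteq> b")
    case False then show ?thesis unfolding m by (simp only: mob_n.simps) (use False in auto)
  next
    case True
    have "(\<Sum>c\<in>Iv A le a b - {b}. mob_n A le m' a c) = (\<Sum>c\<in>Iv A le a b - {b}. mob_n A le n a c)"
    proof (rule sum.cong)
      fix c assume c: "c \<in> Iv A le a b - {b}"
      have "card (Iv A le a c) \<le> n" using Iv_less[OF fin po _ _ c] True Suc.prems by simp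
      then show "mob_n A le m' a c = mob_n A le n a c" using Suc.IH nm by blast
    qed simp
    then show ?thesis using m True by simp
  qed
qed

lemma mp_exists:
  assumes fin: "finite A" and po: "po A le"
  shows "MP A le (mob_n A le (Suc (card A)))"
proof -
  let ?N = "card A"
  have st: "mob_n A le (Suc ?N) a c = mob_n A le ?N a c" for a c
  proof (rule mob_stable[OF fin po])
    show "card (Iv A le a c) \<le> ?N" using fin by (intro card_mono) (auto simp: Iv_def)
  qed simp
  have 2: "(\<Sum>c\<in>{c\<in>A. le a c \<and> le c b}. mob_n A le (Suc ?N) a c) = 0"
    if ab: "a \<in> A" "b \<in> A" "le a b" "a \<noteq> b" for a b
  proof -
    have bI: "b \<in> Iv A le a b" using ab po_refl[OF po] unfolding Iv_def by simp
    have finI: "finite (Iv A le a b)" using fin unfolding Iv_def by simp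
    have "(\<Sum>c\<in>Iv A le a b. mob_n A le (Suc ?N) a c)
        = mob_n A le (Suc ?N) a b + (\<Sum>c\<in>Iv A le a b - {b}. mob_n A le (Suc ?N) a c)"
      by (rule sum.remove[OF finI bI])
    also have "\<dots> = 0"
    proof -
      have e1: "mob_n A le (Suc ?N) a b = - (\<Sum>c\<in>Iv A le a b - {b}. mob_n A le ?N a c)"
        using ab by simp
      have e2: "(\<Sum>c\<in>Iv A le a b - {b}. mob_n A le (Suc ?N) a c) = (\<Sum>c\<in>Iv A le a b - {b}. mob_n A le ?N a c)"
        by (rule sum.cong) (simp_all only: st)
      show ?thesis unfolding e1 e2 by simp
    qed
    finally show ?thesis unfolding Iv_def .
  qed
  show ?thesis unfolding MP_def
  proof (intro conjI ballI allI impI)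
    fix a assume "a \<in> A" then show "mob_n A le (Suc ?N) a a = 1" using po_refl[OF po] by simp
  next
    fix a b assume "a \<in> A" "b \<in> A" "le a b \<and> a \<noteq> b"
    then show "(\<Sum>c\<in>{c\<in>A. le a c \<and> le c b}. mob_n A le (Suc ?N) a c) = 0" using 2 by blast
  next
    fix a b assume h: "\<not> (a \<in> A \<and> b \<in> A \<and> le a b)"
    show "mob_n A le (Suc ?N) a b = 0" by (simp only: mob_n.simps if_not_P[OF h])
  qed
qed

lemma mobius_MP:
  assumes fin: "finite A" and po: "po A le"
  shows "MP A le (mobius A le)"
proof -
  have "\<exists>!m. MP A le m" using mp_exists[OF fin po] mp_unique[OF fin po] by blast
  then show ?thesis unfolding mobius_alt by (rule theI')
qed

lemma mobius_eq:
  assumes fin: "finite A" and po: "po A le" and m: "MP A le m"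
  shows "mobius A le = m"
  using mp_unique[OF fin po mobius_MP[OF fin po] m] .


lemma po_le: "po (UNIV :: 'a::order set) (\<le>)"
  unfolding po_def by auto

lemma po_ge: "po (UNIV :: 'a::order set) (\<lambda>a b. b \<le> a)"
  unfolding po_def by auto

lemma L1:
  fixes a x :: "'a::{finite, order}"
  shows "(\<Sum>c\<in>UNIV. if a \<le> c \<and> c \<le> x then mobius UNIV (\<le>) a c else 0) = (if a = x then 1 else 0)"
proof -
  have M: "MP (UNIV::'a set) (\<le>) (mobius UNIV (\<le>))" by (rule mobius_MP[OF _ po_le]) simp
  have e: "(\<Sum>c\<in>UNIV. if a \<le> c \<and> c \<le> x then mobius UNIV (\<le>) a c else 0)
     = (\<Sum>c\<in>{c\<in>UNIV. a \<le> c \<and> c \<le> x}. mobius UNIV (\<le>) a c)"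
    by (rule sum.inter_filter[symmetric]) simp
  show ?thesis
  proof (cases "a \<le> x")
    case False
    then show ?thesis by (auto intro!: sum.neutral dest: order_trans)
  next
    case True
    show ?thesis
    proof (cases "a = x")
      case True
      have "{c\<in>UNIV. a \<le> c \<and> c \<le> x} = {a}" using True by auto
      then show ?thesis using e M True unfolding MP_def by simp
    next
      case False
      then show ?thesis using e M \<open>a \<le> x\<close> unfolding MP_def by simp
    qed
  qed
qed

lemma R1:
  fixes z x :: "'a::{finite, order}"
  shows "(\<Sum>c\<in>UNIV. if z \<le> c \<and> c \<le> x then mobius UNIV (\<lambda>a b. b \<le> a) x c else 0) = (if z = x then 1 else 0)"
proof -
  have M: "MP (UNIV::'a set) (\<lambda>a b. b \<le> a) (mobius UNIV (\<lambda>a b. b \<le> a))" by (rule mobius_MP[OF _ po_ge]) simp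
  have e: "(\<Sum>c\<in>UNIV. if z \<le> c \<and> c \<le> x then mobius UNIV (\<lambda>a b. b \<le> a) x c else 0)
     = (\<Sum>c\<in>{c\<in>UNIV. c \<le> x \<and> z \<le> c}. mobius UNIV (\<lambda>a b. b \<le> a) x c)"
    by (subst sum.inter_filter) (auto intro!: sum.cong)
  show ?thesis
  proof (cases "z \<le> x")
    case False
    then show ?thesis by (auto intro!: sum.neutral dest: order_trans)
  next
    case True
    show ?thesis
    proof (cases "z = x")
      case True
      have "{c\<in>UNIV. c \<le> x \<and> z \<le> c} = {x}" using True by auto
      then show ?thesis using e M True unfolding MP_def by simp
    next
      case False
      then show ?thesis using e M \<open>z \<le> x\<close> unfolding MP_def by simp
    qed
  qed
qed

lemma mu_dual:
  fixes a b :: "'a::{finite, order}"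
  shows "mobius UNIV (\<le>) a b = mobius UNIV (\<lambda>a b. b \<le> a) b a"
proof -
  let ?m = "mobius (UNIV::'a set) (\<le>)"
  let ?d = "mobius (UNIV::'a set) (\<lambda>a b. b \<le> a)"
  have M: "MP (UNIV::'a set) (\<le>) ?m" by (rule mobius_MP[OF _ po_le]) simp
  have D: "MP (UNIV::'a set) (\<lambda>a b. b \<le> a) ?d" by (rule mobius_MP[OF _ po_ge]) simp
  show ?thesis
  proof (cases "a \<le> b")
    case False
    then show ?thesis using M D unfolding MP_def by auto
  next
    case ab: True
    let ?S = "\<Sum>c\<in>UNIV. \<Sum>d\<in>UNIV. (if a \<le> c \<and> c \<le> d \<and> d \<le> b then ?m a c * ?d b d else 0)"
    have "?S = (\<Sum>c\<in>UNIV. (if a \<le> c then ?m a c else 0) *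
                  (\<Sum>d\<in>UNIV. if c \<le> d \<and> d \<le> b then ?d b d else 0))"
      by (rule sum.cong) (auto simp: sum_distrib_left intro!: sum.cong)
    also have "\<dots> = (\<Sum>c\<in>UNIV. if c = b then (if a \<le> c then ?m a c else 0) else 0)"
      by (rule sum.cong) (simp_all add: R1)
    also have "\<dots> = ?m a b" using ab by simp
    finally have 1: "?S = ?m a b" .
    have "?S = (\<Sum>d\<in>UNIV. \<Sum>c\<in>UNIV. (if a \<le> c \<and> c \<le> d \<and> d \<le> b then ?m a c * ?d b d else 0))"
      by (rule sum.swap)
    also have "\<dots> = (\<Sum>d\<in>UNIV. (if d \<le> b then ?d b d else 0) *
                  (\<Sum>c\<in>UNIV. if a \<le> c \<and> c \<le> d then ?m a c else 0))"
      by (rule sum.cong) (auto simp: sum_distrib_left intro!: sum.cong)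
    also have "\<dots> = (\<Sum>d\<in>UNIV. if a = d then (if d \<le> b then ?d b d else 0) else 0)"
      by (rule sum.cong) (simp_all add: L1)
    also have "\<dots> = ?d b a" using ab by simp
    finally show ?thesis using 1 by simp
  qed
qed

lemma R2:
  fixes z x :: "'a::{finite, order}"
  shows "(\<Sum>c\<in>UNIV. if z \<le> c \<and> c \<le> x then mobius UNIV (\<le>) c x else 0) = (if z = x then 1 else 0)"
proof -
  have "(\<Sum>c\<in>UNIV. if z \<le> c \<and> c \<le> x then mobius UNIV (\<le>) c x else 0)
      = (\<Sum>c\<in>UNIV. if z \<le> c \<and> c \<le> x then mobius UNIV (\<lambda>a b. b \<le> a) x c else 0)"
    by (rule sum.cong) (use mu_dual in auto)
  then show ?thesis using R1[of z x] by simp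
qed

lemma L2:
  fixes a x :: "'a::{finite, order}"
  shows "sum (mobius UNIV (\<le>) a) {a..x} = (if a = x then 1 else 0)"
proof -
  have "sum (mobius UNIV (\<le>) a) {a..x} = sum (mobius UNIV (\<le>) a) {c\<in>UNIV. a \<le> c \<and> c \<le> x}"
    by (rule sum.cong) auto
  also have "\<dots> = (\<Sum>c\<in>UNIV. if a \<le> c \<and> c \<le> x then mobius UNIV (\<le>) a c else 0)"
    by (rule sum.inter_filter) simp
  also have "\<dots> = (if a = x then 1 else 0)" by (rule L1)
  finally show ?thesis .
qed

lemma sum_pair_prod:
  fixes F :: "'a::finite \<Rightarrow> real" and G :: "'b::finite \<Rightarrow> real"
  shows "(\<Sum>q\<in>UNIV. F (fst q) * G (snd q)) = sum F UNIV * sum G UNIV"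
proof -
  have "(\<Sum>q\<in>UNIV. F (fst q) * G (snd q)) = (\<Sum>q\<in>UNIV \<times> UNIV. F (fst q) * G (snd q))"
    by simp
  also have "\<dots> = (\<Sum>a\<in>UNIV. \<Sum>b\<in>UNIV. F a * G b)"
    unfolding sum.cartesian_product by (simp add: case_prod_beta)
  also have "\<dots> = sum F UNIV * sum G UNIV" by (simp add: sum_product)
  finally show ?thesis .
qed


lemma finD: "finite (disj_pairs :: ('a::{finite, semilattice_inf, order_bot} \<times> 'a) set)"
  by (rule finite_subset[OF subset_UNIV]) simp

lemma poD: "po (disj_pairs :: ('a::{finite, semilattice_inf, order_bot} \<times> 'a) set) prod_le"
  unfolding po_def prod_le_def by (auto simp: prod_eq_iff)

lemma boxD:
  fixes q :: "'a::{semilattice_inf, order_bot} \<times> 'a"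
  assumes "p \<in> disj_pairs" "prod_le q p" shows "q \<in> disj_pairs"
proof -
  have "inf (fst q) (snd q) \<le> inf (fst p) (snd p)"
    using assms(2) unfolding prod_le_def by (intro inf_mono) auto
  then show ?thesis using assms(1) unfolding disj_pairs_def by (cases p, cases q) (auto simp: bot_unique)
qed

lemma intervalD:
  fixes a b :: "'a::{semilattice_inf, order_bot} \<times> 'a"
  assumes "b \<in> disj_pairs"
  shows "{c\<in>disj_pairs. prod_le a c \<and> prod_le c b} = {fst a..fst b} \<times> {snd a..snd b}"
  using boxD[OF assms] unfolding prod_le_def by auto

lemma MP_nu:
  "MP (disj_pairs :: ('a::{finite, semilattice_inf, order_bot} \<times> 'a) set) prod_le
     (\<lambda>p q. if p \<in> disj_pairs \<and> q \<in> disj_pairs \<and> prod_le p q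
            then mobius UNIV (\<le>) (fst p) (fst q) * mobius UNIV (\<le>) (snd p) (snd q) else 0)"
proof -
  let ?m = "mobius (UNIV::'a set) (\<le>)"
  have M: "MP (UNIV::'a set) (\<le>) ?m" by (rule mobius_MP[OF _ po_le]) simp
  have 2: "(\<Sum>c\<in>{c\<in>disj_pairs. prod_le a c \<and> prod_le c b}.
             (if a \<in> disj_pairs \<and> c \<in> disj_pairs \<and> prod_le a c then ?m (fst a) (fst c) * ?m (snd a) (snd c) else 0)) = 0"
    if ab: "a \<in> disj_pairs" "b \<in> disj_pairs" "prod_le a b" "a \<noteq> b" for a b :: "'a \<times> 'a"
  proof -
    have "(\<Sum>c\<in>{c\<in>disj_pairs. prod_le a c \<and> prod_le c b}.
             (if a \<in> disj_pairs \<and> c \<in> disj_pairs \<and> prod_le a c then ?m (fst a) (fst c) * ?m (snd a) (snd c) else 0))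
        = (\<Sum>c\<in>{fst a..fst b} \<times> {snd a..snd b}. ?m (fst a) (fst c) * ?m (snd a) (snd c))"
      unfolding intervalD[OF ab(2), symmetric] using ab(1) by (intro sum.cong) auto
    also have "\<dots> = (\<Sum>c1\<in>{fst a..fst b}. \<Sum>c2\<in>{snd a..snd b}. ?m (fst a) c1 * ?m (snd a) c2)"
      unfolding sum.cartesian_product by (simp add: case_prod_beta)
    also have "\<dots> = sum (?m (fst a)) {fst a..fst b} * sum (?m (snd a)) {snd a..snd b}"
      by (simp add: sum_product)
    also have "\<dots> = 0" using ab(4) by (cases a, cases b) (simp add: L2)
    finally show ?thesis .
  qed
  have M1: "?m u u = 1" for u using M unfolding MP_def by simp
  show ?thesis unfolding MP_def
  proof (intro conjI ballI allI impI)
    fix a :: "'a \<times> 'a" assume "a \<in> disj_pairs"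
    then show "(if a \<in> disj_pairs \<and> a \<in> disj_pairs \<and> prod_le a a
            then ?m (fst a) (fst a) * ?m (snd a) (snd a) else 0) = 1"
      by (simp add: M1 prod_le_def)
  next
    fix a b :: "'a \<times> 'a"
    assume "a \<in> disj_pairs" "b \<in> disj_pairs" "prod_le a b \<and> a \<noteq> b"
    then show "(\<Sum>c\<in>{c\<in>disj_pairs. prod_le a c \<and> prod_le c b}.
             (if a \<in> disj_pairs \<and> c \<in> disj_pairs \<and> prod_le a c then ?m (fst a) (fst c) * ?m (snd a) (snd c) else 0)) = 0"
      using 2 by blast
  next
    fix a b :: "'a \<times> 'a"
    assume h: "\<not> (a \<in> disj_pairs \<and> b \<in> disj_pairs \<and> prod_le a b)"
    show "(if a \<in> disj_pairs \<and> b \<in> disj_pairs \<and> prod_le a b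
            then ?m (fst a) (fst b) * ?m (snd a) (snd b) else 0) = 0" by (rule if_not_P[OF h])
  qed
qed

theorem mainTheorem2:
  shows "(\<forall>z t x y. (z, t) \<in> (disj_pairs :: ('a::{finite, semilattice_inf, order_bot} \<times> 'a) set) \<and> (x, y) \<in> disj_pairs
              \<and> prod_le (z, t) (x, y) \<longrightarrow>
            mobius disj_pairs prod_le (z, t) (x, y)
              = mobius (UNIV :: 'a set) (\<le>) z x * mobius (UNIV :: 'a set) (\<le>) t y)
       \<and> (\<forall>(f :: 'a \<times> 'a \<Rightarrow> real) (g :: 'a \<times> 'a \<Rightarrow> real).
            (\<forall>p\<in>disj_pairs. f p = (\<Sum>q\<in>{q\<in>disj_pairs. prod_le q p}. g q)) \<longrightarrow>
            (\<forall>(x, y)\<in>disj_pairs. g (x, y) =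
               (\<Sum>(z, t)\<in>{q\<in>disj_pairs. prod_le q (x, y)}.
                  mobius UNIV (\<le>) z x * mobius UNIV (\<le>) t y * f (z, t))))"
proof (intro conjI allI impI)
  fix z t x y :: 'a
  assume h: "(z, t) \<in> disj_pairs \<and> (x, y) \<in> disj_pairs \<and> prod_le (z, t) (x, y)"
  have "mobius (disj_pairs :: ('a \<times> 'a) set) prod_le = (\<lambda>p q. if p \<in> disj_pairs \<and> q \<in> disj_pairs \<and> prod_le p q
            then mobius UNIV (\<le>) (fst p) (fst q) * mobius UNIV (\<le>) (snd p) (snd q) else 0)"
    using mobius_eq[OF finD poD MP_nu] .
  then show "mobius disj_pairs prod_le (z, t) (x, y)
              = mobius (UNIV :: 'a set) (\<le>) z x * mobius (UNIV :: 'a set) (\<le>) t y"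
    using h by simp
next
  fix f g :: "'a \<times> 'a \<Rightarrow> real"
  assume fg: "\<forall>p\<in>disj_pairs. f p = (\<Sum>q\<in>{q\<in>disj_pairs. prod_le q p}. g q)"
  let ?m = "mobius (UNIV::'a set) (\<le>)"
  show "\<forall>(x, y)\<in>disj_pairs. g (x, y) =
               (\<Sum>(z, t)\<in>{q\<in>disj_pairs. prod_le q (x, y)}. ?m z x * ?m t y * f (z, t))"
  proof (intro ballI, clarify)
    fix x y assume p: "(x, y) \<in> (disj_pairs :: ('a \<times> 'a) set)"
    have setp: "{q\<in>disj_pairs. prod_le q (x, y)} = {q\<in>UNIV. prod_le q (x, y)}"
      using boxD[OF p] by auto
    have fq: "f q = (\<Sum>r\<in>UNIV. if prod_le r q then g r else 0)" if q: "prod_le q (x, y)" for q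
    proof -
      have qD: "q \<in> disj_pairs" using boxD[OF p q] .
      have se: "{r\<in>disj_pairs. prod_le r q} = {r\<in>UNIV. prod_le r q}" using boxD[OF qD] by auto
      have "f q = sum g {r\<in>disj_pairs. prod_le r q}" using fg qD by blast
      also have "\<dots> = sum g {r\<in>UNIV. prod_le r q}" unfolding se ..
      also have "\<dots> = (\<Sum>r\<in>UNIV. if prod_le r q then g r else 0)" by (rule sum.inter_filter) simp
      finally show ?thesis .
    qed
    have "(\<Sum>(z, t)\<in>{q\<in>disj_pairs. prod_le q (x, y)}. ?m z x * ?m t y * f (z, t))
        = (\<Sum>q\<in>{q\<in>UNIV. prod_le q (x, y)}. ?m (fst q) x * ?m (snd q) y * f q)"
      unfolding setp by (simp add: case_prod_beta)
    also have "\<dots> = (\<Sum>q\<in>UNIV. if prod_le q (x, y) then ?m (fst q) x * ?m (snd q) y * f q else 0)"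
      by (rule sum.inter_filter) simp
    also have "\<dots> = (\<Sum>q\<in>UNIV. \<Sum>r\<in>UNIV. if prod_le r q \<and> prod_le q (x, y)
                       then ?m (fst q) x * ?m (snd q) y * g r else 0)"
      by (rule sum.cong) (auto simp: fq sum_distrib_left intro!: sum.cong)
    also have "\<dots> = (\<Sum>r\<in>UNIV. \<Sum>q\<in>UNIV. if prod_le r q \<and> prod_le q (x, y)
                       then ?m (fst q) x * ?m (snd q) y * g r else 0)"
      by (rule sum.swap)
    also have "\<dots> = (\<Sum>r\<in>UNIV. g r * (\<Sum>q\<in>UNIV.
                (if fst r \<le> fst q \<and> fst q \<le> x then ?m (fst q) x else 0) *
                (if snd r \<le> snd q \<and> snd q \<le> y then ?m (snd q) y else 0)))"
      by (rule sum.cong) (auto simp: sum_distrib_left prod_le_def intro!: sum.cong)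
    also have "\<dots> = (\<Sum>r\<in>UNIV. g r * ((if fst r = x then 1 else 0) * (if snd r = y then 1 else 0)))"
    proof (rule sum.cong[OF refl])
      fix r :: "'a \<times> 'a"
      have "(\<Sum>q\<in>UNIV.
                (if fst r \<le> fst q \<and> fst q \<le> x then ?m (fst q) x else 0) *
                (if snd r \<le> snd q \<and> snd q \<le> y then ?m (snd q) y else 0))
          = (\<Sum>c\<in>UNIV. if fst r \<le> c \<and> c \<le> x then ?m c x else 0) *
            (\<Sum>d\<in>UNIV. if snd r \<le> d \<and> d \<le> y then ?m d y else 0)"
        using sum_pair_prod[of "\<lambda>c. if fst r \<le> c \<and> c \<le> x then ?m c x else 0"
                               "\<lambda>d. if snd r \<le> d \<and> d \<le> y then ?m d y else 0"] by (simp only:)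
      also have "\<dots> = (if fst r = x then 1 else 0) * (if snd r = y then 1 else 0)"
        by (simp only: R2)
      finally show "g r * (\<Sum>q\<in>UNIV.
                (if fst r \<le> fst q \<and> fst q \<le> x then ?m (fst q) x else 0) *
                (if snd r \<le> snd q \<and> snd q \<le> y then ?m (snd q) y else 0))
          = g r * ((if fst r = x then 1 else 0) * (if snd r = y then 1 else 0))" by simp
    qed
    also have "\<dots> = (\<Sum>r\<in>UNIV. if r = (x, y) then g r else 0)"
      by (rule sum.cong) (auto simp: prod_eq_iff)
    also have "\<dots> = g (x, y)" by simp
    finally show "g (x, y) = (\<Sum>(z, t)\<in>{q\<in>disj_pairs. prod_le q (x, y)}. ?m z x * ?m t y * f (z, t))"
      by simp
  qed
qed

end
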